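(* Let $(U,\mathcal{S})$ be a set system with $|\mathcal{S}|=m$, let $\epsilon\in(0,1)$, $0<\delta<1/e$, and $\epsilon'=\epsilon/(2\ln(e/\delta))$. Consider the algorithm that, on a private set $R\subseteq U$, sets $R_1=R$, $\mathcal{S}_1=\mathcal{S}$ and for $i=1,\dots,m$: picks a set $S\in\mathcal{S}_i$ with probability proportional to $\exp(\epsilon'|S\cap R_i|)$, outputs $S$, and sets $R_{i+1}=R_i\setminus S$, $\mathcal{S}_{i+1}=\mathcal{S}_i\setminus\{S\}$ (so the output is a permutation of $\mathcal{S}$). Then this algorithm is $(\epsilon,\delta)$-differentially private: for any $A,B\subseteq U$ with symmetric difference of size one and any set $\mathcal{P}$ of outputs, $\Pr[M(A)\in\mathcal{P}]\le e^{\epsilon}\Pr[M(B)\in\mathcal{P}]+\delta$. *)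

theory Defs
  imports Complex_Main
begin

fun seq_prob :: "real \<Rightarrow> 'a set \<Rightarrow> 'a set set \<Rightarrow> 'a set list \<Rightarrow> real" where
  "seq_prob e R F [] = (if F = {} then 1 else 0)"
| "seq_prob e R F (S # Ss) =
     (if S \<in> F then
        exp (e * real (card (S \<inter> R))) / (\<Sum>T\<in>F. exp (e * real (card (T \<inter> R))))
        * seq_prob e (R - S) (F - {S}) Ss
      else 0)"

definition outputs :: "'a set set \<Rightarrow> 'a set list set" where
  "outputs F = {xs. distinct xs \<and> set xs = F}"

definition mech_prob :: "real \<Rightarrow> 'a set set \<Rightarrow> 'a set \<Rightarrow> 'a set list set \<Rightarrow> real" where
  "mech_prob e F R P = (\<Sum>xs\<in>P \<inter> outputs F. seq_prob e R F xs)"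

end

theory Submission imports Defs begin

lemma finite_outputs: "finite F \<Longrightarrow> finite (outputs F)"
proof -
  assume "finite F"
  have "outputs F \<subseteq> {xs. set xs \<subseteq> F \<and> length xs \<le> card F}"
    unfolding outputs_def using distinct_card by fastforce
  thus ?thesis using finite_lists_length_le[OF \<open>finite F\<close>] finite_subset by blast
qed

lemma outputs_hd:
  assumes "S \<in> F"
  shows "{xs \<in> P \<inter> outputs F. hd xs = S} = (Cons S) ` ({ys. S # ys \<in> P} \<inter> outputs (F - {S}))"
proof (intro equalityI subsetI)
  fix xs assume "xs \<in> {xs \<in> P \<inter> outputs F. hd xs = S}"
  then have xs: "xs \<in> P" "distinct xs" "set xs = F" "hd xs = S" by (auto simp: outputs_def)
  then have "xs \<noteq> []" using assms by auto
  then obtain ys where "xs = S # ys" using xs(4) by (cases xs) auto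
  moreover have "S # ys \<in> P" using xs \<open>xs = S # ys\<close> by simp
  moreover have "distinct ys" "S \<notin> set ys" using xs(2) \<open>xs = S # ys\<close> by auto
  moreover have "set ys = F - {S}" using xs(3) \<open>xs = S # ys\<close> \<open>S \<notin> set ys\<close> by auto
  ultimately show "xs \<in> (Cons S) ` ({ys. S # ys \<in> P} \<inter> outputs (F - {S}))"
    unfolding outputs_def by blast
next
  fix xs assume "xs \<in> (Cons S) ` ({ys. S # ys \<in> P} \<inter> outputs (F - {S}))"
  then obtain ys where ys: "xs = S # ys" "S # ys \<in> P" "distinct ys" "set ys = F - {S}"
    unfolding outputs_def by blast
  have "distinct xs" using ys by simp
  moreover have "set xs = F" using ys assms by auto
  ultimately show "xs \<in> {xs \<in> P \<inter> outputs F. hd xs = S}" using ys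
    unfolding outputs_def by simp
qed

definition wt :: "real \<Rightarrow> 'a set \<Rightarrow> 'a set \<Rightarrow> real" where
  "wt e R S = exp (e * real (card (S \<inter> R)))"

lemma mech_prob_step:
  assumes "finite F" "F \<noteq> {}"
  shows "mech_prob e F R P = (\<Sum>S\<in>F. wt e R S / (\<Sum>T\<in>F. wt e R T) *
            mech_prob e (F - {S}) (R - S) {ys. S # ys \<in> P})"
proof -
  have fin: "finite (P \<inter> outputs F)" using finite_outputs[OF assms(1)] by auto
  have img: "hd ` (P \<inter> outputs F) \<subseteq> F"
  proof
    fix y assume "y \<in> hd ` (P \<inter> outputs F)"
    then obtain xs where "xs \<in> outputs F" "y = hd xs" by auto
    then show "y \<in> F" using assms(2) by (cases xs) (auto simp: outputs_def)
  qed
  have "mech_prob e F R P = (\<Sum>S\<in>F. \<Sum>xs\<in>{xs \<in> P \<inter> outputs F. hd xs = S}. seq_prob e R F xs)"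
    unfolding mech_prob_def using sum.group[OF fin assms(1) img, of "seq_prob e R F"] by simp
  also have "\<dots> = (\<Sum>S\<in>F. wt e R S / (\<Sum>T\<in>F. wt e R T) *
            mech_prob e (F - {S}) (R - S) {ys. S # ys \<in> P})"
  proof (rule sum.cong[OF refl])
    fix S assume S: "S \<in> F"
    have "(\<Sum>xs\<in>{xs \<in> P \<inter> outputs F. hd xs = S}. seq_prob e R F xs)
       = (\<Sum>ys\<in>{ys. S # ys \<in> P} \<inter> outputs (F - {S}). seq_prob e R F (S # ys))"
      unfolding outputs_hd[OF S] by (subst sum.reindex) (auto simp: inj_on_def)
    also have "\<dots> = wt e R S / (\<Sum>T\<in>F. wt e R T) * mech_prob e (F - {S}) (R - S) {ys. S # ys \<in> P}"
      using S by (simp add: mech_prob_def wt_def sum_distrib_left)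
    finally show "(\<Sum>xs\<in>{xs \<in> P \<inter> outputs F. hd xs = S}. seq_prob e R F xs) = \<dots>" .
  qed
  finally show ?thesis .
qed

lemma outputs_empty: "outputs {} = {[]}" by (auto simp: outputs_def)

lemma mech_prob_empty: "mech_prob e {} R P = (if [] \<in> P then 1 else 0)"
  by (simp add: mech_prob_def outputs_empty)

lemma wt_pos: "wt e R S > 0" by (simp add: wt_def)

lemma seq_prob_nonneg: "seq_prob e R F xs \<ge> 0"
  by (induction xs arbitrary: R F) (auto intro!: mult_nonneg_nonneg divide_nonneg_nonneg sum_nonneg)

lemma mech_prob_nonneg: "mech_prob e F R P \<ge> 0"
  unfolding mech_prob_def by (simp add: sum_nonneg seq_prob_nonneg)

lemma wt_insert:
  assumes "finite R" "x \<notin> R"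
  shows "wt e (insert x R) S = (if x \<in> S then exp e * wt e R S else wt e R S)"
proof (cases "x \<in> S")
  case True
  have "S \<inter> insert x R = insert x (S \<inter> R)" using True by auto
  hence "card (S \<inter> insert x R) = Suc (card (S \<inter> R))" using assms by simp
  have "exp (e * (1 + real (card (S \<inter> R)))) = exp e * exp (e * real (card (S \<inter> R)))"
    by (simp add: ring_distribs exp_add mult.commute)
  thus ?thesis using True \<open>card (S \<inter> insert x R) = Suc (card (S \<inter> R))\<close>
    unfolding wt_def by (simp del: Int_insert_right)
next
  case False
  hence "S \<inter> insert x R = S \<inter> R" by auto
  thus ?thesis using False by (simp add: wt_def)
qed

lemma mech_prob_le1:
  assumes "finite F"
  shows "mech_prob e F R P \<le> 1"
  using assms
proof (induction "card F" arbitrary: F R P rule: less_induct)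
  case less
  show ?case
  proof (cases "F = {}")
    case True thus ?thesis by (simp add: mech_prob_empty)
  next
    case False
    have Z: "sum (wt e R) F > 0" using False less.prems by (intro sum_pos) (auto simp: wt_pos)
    have "mech_prob e F R P = (\<Sum>S\<in>F. wt e R S / sum (wt e R) F *
            mech_prob e (F - {S}) (R - S) {ys. S # ys \<in> P})"
      by (rule mech_prob_step[OF less.prems False])
    also have "\<dots> \<le> (\<Sum>S\<in>F. wt e R S / sum (wt e R) F * 1)"
    proof (rule sum_mono)
      fix S assume S: "S \<in> F"
      have "card (F - {S}) < card F" using S less.prems by (intro card_Diff1_less)
      hence "mech_prob e (F - {S}) (R - S) {ys. S # ys \<in> P} \<le> 1"
        using less.hyps less.prems by simp
      thus "wt e R S / sum (wt e R) F * mech_prob e (F - {S}) (R - S) {ys. S # ys \<in> P}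
            \<le> wt e R S / sum (wt e R) F * 1"
        by (intro mult_left_mono) (auto intro!: divide_nonneg_nonneg less_imp_le[OF wt_pos] sum_nonneg)
    qed
    also have "\<dots> = 1" using Z by (simp add: sum_divide_distrib[symmetric])
    finally show ?thesis .
  qed
qed

lemma dir1:
  assumes "finite F" "finite R" "x \<notin> R" "0 \<le> e"
  shows "mech_prob e F (insert x R) P \<le> exp e * mech_prob e F R P"
  using assms
proof (induction "card F" arbitrary: F R P rule: less_induct)
  case less
  show ?case
  proof (cases "F = {}")
    case True
    have eq: "mech_prob e F (insert x R) P = mech_prob e F R P" unfolding True mech_prob_empty ..
    have "1 * mech_prob e F R P \<le> exp e * mech_prob e F R P"
      using less.prems(4) mech_prob_nonneg[of e F R P] by (intro mult_right_mono) auto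
    thus ?thesis using eq by simp
  next
    case False
    define ZA where "ZA = sum (wt e (insert x R)) F"
    define ZB where "ZB = sum (wt e R) F"
    have ZB: "ZB > 0" unfolding ZB_def using False less.prems by (intro sum_pos) (auto simp: wt_pos)
    have ZAB: "ZB \<le> ZA" unfolding ZA_def ZB_def
    proof (intro sum_mono)
      fix S
      have "1 * wt e R S \<le> exp e * wt e R S"
        using less.prems(4) wt_pos[of e R S] by (intro mult_right_mono) auto
      thus "wt e R S \<le> wt e (insert x R) S" by (simp add: wt_insert[OF less.prems(2,3)])
    qed
    have "mech_prob e F (insert x R) P = (\<Sum>S\<in>F. wt e (insert x R) S / ZA *
            mech_prob e (F - {S}) (insert x R - S) {ys. S # ys \<in> P})"
      unfolding ZA_def by (rule mech_prob_step[OF less.prems(1) False])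
    also have "\<dots> \<le> (\<Sum>S\<in>F. exp e * (wt e R S / ZB * mech_prob e (F - {S}) (R - S) {ys. S # ys \<in> P}))"
    proof (rule sum_mono)
      fix S assume S: "S \<in> F"
      define MB where "MB = mech_prob e (F - {S}) (R - S) {ys. S # ys \<in> P}"
      have MB: "MB \<ge> 0" unfolding MB_def by (rule mech_prob_nonneg)
      have w: "wt e R S > 0" by (rule wt_pos)
      have inv: "1 / ZA \<le> 1 / ZB" using ZB ZAB by (simp add: frac_le)
      show "wt e (insert x R) S / ZA * mech_prob e (F - {S}) (insert x R - S) {ys. S # ys \<in> P}
            \<le> exp e * (wt e R S / ZB * MB)"
      proof (cases "x \<in> S")
        case True
        have "insert x R - S = R - S" using True by auto
        hence "wt e (insert x R) S / ZA * mech_prob e (F - {S}) (insert x R - S) {ys. S # ys \<in> P}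
            = exp e * (wt e R S * (1/ZA) * MB)"
          using True by (simp add: wt_insert[OF less.prems(2,3)] MB_def)
        also have "\<dots> \<le> exp e * (wt e R S * (1/ZB) * MB)"
          using inv w MB by (intro mult_left_mono mult_right_mono) auto
        finally show ?thesis by simp
      next
        case False
        have eq: "insert x R - S = insert x (R - S)" using False by auto
        have "card (F - {S}) < card F" using S less.prems by (intro card_Diff1_less)
        hence IH: "mech_prob e (F - {S}) (insert x R - S) {ys. S # ys \<in> P} \<le> exp e * MB"
          unfolding eq MB_def using less.hyps less.prems by simp
        have "wt e (insert x R) S / ZA * mech_prob e (F - {S}) (insert x R - S) {ys. S # ys \<in> P}
            = wt e R S * (1/ZA) * mech_prob e (F - {S}) (insert x R - S) {ys. S # ys \<in> P}"
          using False by (simp add: wt_insert[OF less.prems(2,3)])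
        also have "\<dots> \<le> wt e R S * (1/ZB) * (exp e * MB)"
          using inv w MB IH ZB ZAB by (intro mult_mono) (auto intro: mech_prob_nonneg)
        also have "\<dots> = exp e * (wt e R S / ZB * MB)" by (simp add: mult_ac)
        finally show ?thesis .
      qed
    qed
    also have "\<dots> = exp e * mech_prob e F R P"
      unfolding mech_prob_step[OF less.prems(1) False, of e R P] ZB_def by (simp add: sum_distrib_left)
    finally show ?thesis .
  qed
qed

lemma key_ineq:
  fixes a p K :: real
  assumes "a > 0" "0 \<le> p" "p \<le> 1" "K > 0"
  shows "(1 - p) * (K / (1 + a * p)) powr (-1/a) \<le> K powr (-1/a)"
proof -
  have q: "1 + a * p > 0" using assms by (simp add: add_pos_nonneg)
  have "(K / (1 + a * p)) powr (-1/a) = K powr (-1/a) * (1 + a * p) powr (1/a)"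
  proof -
    have d: "(K/(1 + a * p)) powr (1/a) = K powr (1/a) / (1 + a * p) powr (1/a)"
      using assms q by (simp add: powr_divide)
    have m1: "(K/(1 + a * p)) powr (-1/a) = 1 / (K/(1 + a * p)) powr (1/a)"
      by (metis minus_divide_left powr_minus_divide)
    have m2: "K powr (-1/a) = 1 / K powr (1/a)"
      by (metis minus_divide_left powr_minus_divide)
    have "K powr (1/a) > 0" "(1 + a * p) powr (1/a) > 0" using assms q by auto
    thus ?thesis unfolding m1 m2 d by (simp add: field_simps)
  qed
  also have "(1 + a * p) powr (1/a) = exp (ln (1 + a * p) / a)"
    using q by (simp add: powr_def)
  also have "\<dots> \<le> exp p"
  proof -
    have "ln (1 + a * p) \<le> a * p" using assms by (intro ln_add_one_self_le_self) simp
    hence "ln (1 + a * p) / a \<le> p" using assms by (simp add: divide_le_eq mult.commute)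
    thus ?thesis by simp
  qed
  finally have h: "(K / (1 + a * p)) powr (-1/a) \<le> K powr (-1/a) * exp p"
    by (simp add: mult_left_mono)
  have "(1 - p) * exp p \<le> 1"
  proof -
    have "1 - p \<le> exp (-p)" using exp_ge_add_one_self[of "-p"] by simp
    hence "(1 - p) * exp p \<le> exp (-p) * exp p" by (intro mult_right_mono) auto
    thus ?thesis by (simp add: exp_minus)
  qed
  have "(1 - p) * (K / (1 + a * p)) powr (-1/a) \<le> (1 - p) * (K powr (-1/a) * exp p)"
    using h assms by (intro mult_left_mono) auto
  also have "\<dots> = K powr (-1/a) * ((1 - p) * exp p)" by simp
  also have "\<dots> \<le> K powr (-1/a)" using \<open>(1 - p) * exp p \<le> 1\<close> by (intro mult_left_le) auto
  finally show ?thesis .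
qed

lemma powr_ge1: "0 < K \<Longrightarrow> K \<le> 1 \<Longrightarrow> 0 < (a::real) \<Longrightarrow> 1 \<le> K powr (-1/a)"
proof -
  assume K: "0 < K" "K \<le> 1" and a: "0 < a"
  have "ln K \<le> 0" using K by simp
  moreover have "-1/a < 0" using a by simp
  ultimately have "0 \<le> -1/a * ln K" by (intro mult_nonpos_nonpos) auto
  thus ?thesis using K by (simp add: powr_def)
qed

lemma dir2:
  assumes "finite F" "finite R" "x \<notin> R" "0 < e" "0 < K" "a = exp e - 1"
  shows "mech_prob e F R P \<le> K * mech_prob e F (insert x R) P + K powr (-1/a)"
  using assms
proof (induction "card F" arbitrary: F R P K rule: less_induct)
  case less
  note a_def = less.prems(6)
  have a: "a > 0" unfolding a_def using less.prems by simp
  have h0: "K powr (-1/a) \<ge> 0" by simp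
  have MB0: "mech_prob e F (insert x R) P \<ge> 0" by (rule mech_prob_nonneg)
  show ?case
  proof (cases "K < 1")
    case True
    have "mech_prob e F R P \<le> 1" using less.prems(1) by (rule mech_prob_le1)
    also have "\<dots> \<le> K powr (-1/a)" using powr_ge1[of K a] True less.prems a by simp
    moreover have "K * mech_prob e F (insert x R) P \<ge> 0" using MB0 less.prems by simp
    ultimately show ?thesis by linarith
  next
    case K1: False
    show ?thesis
    proof (cases "F = {}")
      case True
      have "mech_prob e F R P = mech_prob e F (insert x R) P" using True by (simp add: mech_prob_empty)
      also have "\<dots> \<le> K * mech_prob e F (insert x R) P" using MB0 K1 by (simp add: mult_le_cancel_right1)
      finally have "mech_prob e F R P \<le> K * mech_prob e F (insert x R) P" .
      thus ?thesis using h0 by linarith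
    next
      case False
      note fin = less.prems(1) and wi = wt_insert[OF less.prems(2,3)]
      define ZA where "ZA = sum (wt e R) F"
      define ZB where "ZB = sum (wt e (insert x R)) F"
      define W where "W = sum (wt e R) {S\<in>F. x \<in> S}"
      have ZA: "ZA > 0" unfolding ZA_def using False fin by (intro sum_pos) (auto simp: wt_pos)
      have W0: "W \<ge> 0" unfolding W_def by (intro sum_nonneg) (auto intro: less_imp_le[OF wt_pos])
      have WZ: "W \<le> ZA" unfolding W_def ZA_def
        by (intro sum_mono2 fin) (auto intro: less_imp_le[OF wt_pos])
      have s1: "(\<Sum>S\<in>F. if x \<in> S then a * wt e R S else 0) = a * W"
        unfolding W_def sum.inter_filter[OF fin] sum_distrib_left by (intro sum.cong) auto
      have "ZB = ZA + (\<Sum>S\<in>F. if x \<in> S then a * wt e R S else 0)"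
        unfolding ZB_def ZA_def sum.distrib[symmetric] by (intro sum.cong) (auto simp: wi a_def algebra_simps)
      hence ZBeq: "ZB = ZA + a * W" using s1 by simp
      have "a * W \<ge> 0" using a W0 by simp
      hence ZB: "ZB > 0" using ZBeq ZA by linarith
      define p where "p = W / ZA"
      have p0: "0 \<le> p" "p \<le> 1" unfolding p_def using W0 WZ ZA by auto
      have qeq: "1 + a * p = ZB / ZA" unfolding p_def ZBeq using ZA by (simp add: field_simps)
      define K' where "K' = K / (1 + a * p)"
      have K'pos: "K' > 0" unfolding K'_def qeq using ZA ZB less.prems by simp
      have kk: "K' / ZA = K / ZB" unfolding K'_def qeq using ZA ZB by simp
      define c where "c = K' powr (-1/a)"
      have t1: "(\<Sum>S\<in>F. if x \<in> S then 0 else c / ZA * wt e R S)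
            = (\<Sum>S\<in>F. c / ZA * wt e R S) - (\<Sum>S\<in>F. if x \<in> S then c / ZA * wt e R S else 0)"
        unfolding sum_subtractf[symmetric] by (intro sum.cong) auto
      have t2: "(\<Sum>S\<in>F. if x \<in> S then c / ZA * wt e R S else 0) = c / ZA * W"
        unfolding W_def sum.inter_filter[OF fin] sum_distrib_left by (intro sum.cong) auto
      have t3: "(\<Sum>S\<in>F. c / ZA * wt e R S) = c / ZA * ZA"
        unfolding ZA_def by (simp add: sum_distrib_left)
      have "(\<Sum>S\<in>F. if x \<in> S then 0 else c / ZA * wt e R S) = c / ZA * ZA - c / ZA * W"
        using t1 t2 t3 by simp
      hence sumeq: "(\<Sum>S\<in>F. if x \<in> S then 0 else c / ZA * wt e R S) = (1 - p) * c"
        unfolding p_def using ZA by (simp add: field_simps)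
      have "mech_prob e F R P = (\<Sum>S\<in>F. wt e R S / ZA *
            mech_prob e (F - {S}) (R - S) {ys. S # ys \<in> P})"
        unfolding ZA_def by (rule mech_prob_step[OF fin False])
      also have "\<dots> \<le> (\<Sum>S\<in>F. K * (wt e (insert x R) S / ZB *
            mech_prob e (F - {S}) (insert x R - S) {ys. S # ys \<in> P})
            + (if x \<in> S then 0 else c / ZA * wt e R S))"
      proof (rule sum_mono)
        fix S assume S: "S \<in> F"
        have w: "wt e R S > 0" by (rule wt_pos)
        show "wt e R S / ZA * mech_prob e (F - {S}) (R - S) {ys. S # ys \<in> P}
            \<le> K * (wt e (insert x R) S / ZB *
            mech_prob e (F - {S}) (insert x R - S) {ys. S # ys \<in> P})
            + (if x \<in> S then 0 else c / ZA * wt e R S)"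
        proof (cases "x \<in> S")
          case True
          have eq: "insert x R - S = R - S" using True by auto
          define M where "M = mech_prob e (F - {S}) (R - S) {ys. S # ys \<in> P}"
          have M: "M \<ge> 0" unfolding M_def by (rule mech_prob_nonneg)
          have "ZB \<le> ZA + a * ZA" unfolding ZBeq using WZ a by simp
          also have "\<dots> = exp e * ZA" unfolding a_def by (simp add: algebra_simps)
          also have "\<dots> \<le> K * exp e * ZA" using K1 ZA by simp
          finally have "wt e R S * ZB \<le> wt e R S * (K * exp e * ZA)" using w by simp
          hence cc: "wt e R S / ZA \<le> K * (exp e * wt e R S / ZB)" using ZA ZB by (simp add: field_simps)
          have "wt e R S / ZA * M \<le> K * (exp e * wt e R S / ZB) * M"
            using cc M by (rule mult_right_mono)
          thus ?thesis using True by (simp add: eq wi M_def)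
        next
          case False
          have eq: "insert x R - S = insert x (R - S)" using False by auto
          define MB where "MB = mech_prob e (F - {S}) (insert x R - S) {ys. S # ys \<in> P}"
          have "card (F - {S}) < card F" using S fin by (intro card_Diff1_less)
          hence IH: "mech_prob e (F - {S}) (R - S) {ys. S # ys \<in> P} \<le> K' * MB + c"
            unfolding MB_def eq c_def using less.hyps less.prems K'pos by simp
          have "wt e R S / ZA * mech_prob e (F - {S}) (R - S) {ys. S # ys \<in> P}
              \<le> wt e R S / ZA * (K' * MB + c)"
            using IH w ZA by (intro mult_left_mono) auto
          also have "\<dots> = wt e R S * (K' / ZA) * MB + c / ZA * wt e R S"
            using ZA by (simp add: field_simps)
          also have "\<dots> = K * (wt e R S / ZB * MB) + c / ZA * wt e R S"
            unfolding kk by simp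
          finally show ?thesis using False by (simp add: wi MB_def)
        qed
      qed
      also have "\<dots> = K * mech_prob e F (insert x R) P
            + (\<Sum>S\<in>F. if x \<in> S then 0 else c / ZA * wt e R S)"
        unfolding mech_prob_step[OF fin False, of e "insert x R" P] ZB_def
        by (simp add: sum.distrib sum_distrib_left)
      also have "\<dots> = K * mech_prob e F (insert x R) P + (1 - p) * (K / (1 + a * p)) powr (-1/a)"
        unfolding sumeq by (simp only: c_def K'_def)
      also have "\<dots> \<le> K * mech_prob e F (insert x R) P + K powr (-1/a)"
        using key_ineq[OF a p0 less.prems(5)] by simp
      finally show ?thesis .
    qed
  qed
qed

theorem mainTheorem10:
  fixes U :: "'a set" and \<S> :: "'a set set" and m :: nat
    and \<epsilon> \<delta> \<epsilon>' :: real and A B :: "'a set" and P :: "'a set list set"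
  assumes "finite U"
    and "\<S> \<subseteq> Pow U"
    and "card \<S> = m"
    and "0 < \<epsilon>" and "\<epsilon> < 1"
    and "0 < \<delta>" and "\<delta> < 1 / exp 1"
    and "\<epsilon>' = \<epsilon> / (2 * ln (exp 1 / \<delta>))"
    and "A \<subseteq> U" and "B \<subseteq> U"
    and "card ((A - B) \<union> (B - A)) = 1"
  shows "mech_prob \<epsilon>' \<S> A P \<le> exp \<epsilon> * mech_prob \<epsilon>' \<S> B P + \<delta>"
proof -
  have finS: "finite \<S>" using assms(1,2) by (meson finite_Pow_iff finite_subset)
  have finA: "finite A" and finB: "finite B" using assms(1,9,10) finite_subset by auto
  define L where "L = ln (exp 1 / \<delta>)"
  have L: "L = 1 - ln \<delta>" unfolding L_def using assms(6) by (simp add: ln_div)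
  have "ln \<delta> < ln (1 / exp 1)" using assms(6,7) by simp
  hence lnd: "ln \<delta> < -1" by (simp add: ln_div)
  hence L2: "L > 2" using L by simp
  have e': "\<epsilon>' = \<epsilon> / (2 * L)" using assms(8) L_def by simp
  have e'pos: "\<epsilon>' > 0" using e' L2 assms(4) by simp
  have e'le: "\<epsilon>' \<le> \<epsilon>" unfolding e' using L2 assms(4) by (simp add: divide_le_eq)
  have e'half: "\<epsilon>' \<le> 1/2" unfolding e' using L2 assms(4,5) by (simp add: divide_le_eq)
  have MB0: "mech_prob \<epsilon>' \<S> B P \<ge> 0" by (rule mech_prob_nonneg)
  obtain x where x: "(A - B) \<union> (B - A) = {x}" using assms(11) card_1_singletonE by blast
  show ?thesis
  proof (cases "x \<in> A")
    case True
    hence xB: "x \<notin> B" and AB: "A = insert x B" using x by auto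
    have "mech_prob \<epsilon>' \<S> A P \<le> exp \<epsilon>' * mech_prob \<epsilon>' \<S> B P"
      unfolding AB using dir1[OF finS finB xB] e'pos by simp
    also have "\<dots> \<le> exp \<epsilon> * mech_prob \<epsilon>' \<S> B P" using e'le MB0 by (intro mult_right_mono) auto
    finally show ?thesis using assms(6) by simp
  next
    case False
    have xA: "x \<notin> A" using False .
    have s1: "A - B \<subseteq> {x}" "B - A \<subseteq> {x}" "x \<in> (A - B) \<union> (B - A)" using x by auto
    have BA: "B = insert x A" using s1 xA by blast
    define a where "a = exp \<epsilon>' - 1"
    have apos: "a > 0" unfolding a_def using e'pos by simp
    have "exp \<epsilon>' \<le> 1 + 2 * \<epsilon>'" using real_exp_bound_lemma e'pos e'half by simp
    hence a2: "a \<le> 2 * \<epsilon>'" unfolding a_def by linarith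
    have "2 * \<epsilon>' = \<epsilon> / L" unfolding e' using L2 by simp
    hence ale: "a \<le> \<epsilon> / L" using a2 by simp
    have aL: "a * L \<le> \<epsilon>" using ale L2 by (simp add: le_divide_eq)
    have "L \<le> \<epsilon> / a" using aL apos by (simp add: le_divide_eq mult.commute)
    hence "-1/a * \<epsilon> \<le> ln \<delta>" using L by simp
    hence d: "exp (-1/a * \<epsilon>) \<le> \<delta>" using assms(6) by (metis exp_le_cancel_iff exp_ln)
    have "exp \<epsilon> powr (-1/a) = exp (-1/a * \<epsilon>)" by (simp add: powr_def)
    hence "exp \<epsilon> powr (-1/a) \<le> \<delta>" using d by simp
    moreover have "mech_prob \<epsilon>' \<S> A P \<le> exp \<epsilon> * mech_prob \<epsilon>' \<S> B P + exp \<epsilon> powr (-1/a)"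
      unfolding BA by (rule dir2[OF finS finA xA e'pos exp_gt_zero a_def])
    ultimately show ?thesis by linarith
  qed
qed

end
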